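(* Let $F\in\mathcal{P}$ and let $\varphi$ be a Schwarz-type function with $\|\varphi\|_\infty=R<1$. If $|\arg F(z)|<\frac{\pi}{2}-\arcsin\frac{2R}{1+R^2}$ for all $z\in\mathbb{D}$, then $T_{F,\varphi}(f)\in\mathcal{P}$ for every $f\in\mathcal{P}$.
   Context: $\mathbb{D}$ is the open unit disk. $\mathcal{P}$ is the set of analytic $f$ on $\mathbb{D}$ with $\mathrm{Re}\,f>0$ and $f(0)=1$. A Schwarz-type function is an analytic $\varphi:\mathbb{D}\to\mathbb{D}$ with $\varphi(0)=0$. $\|\varphi\|_\infty=\sup_{z\in\mathbb{D}}|\varphi(z)|$. $\arg$ is the principal branch with values in $(-\pi,\pi]$. $T_{F,\varphi}(f)=F\cdot(f\circ\varphi)$. *)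

theory Defs
  imports "HOL-Complex_Analysis.Complex_Analysis"
begin

abbreviation unit_disk :: "complex set" where "unit_disk \<equiv> ball 0 1"

definition carath_class :: "(complex \<Rightarrow> complex) set" where
  "carath_class = {f. f holomorphic_on unit_disk \<and> (\<forall>z\<in>unit_disk. Re (f z) > 0) \<and> f 0 = 1}"

definition schwarz_type :: "(complex \<Rightarrow> complex) \<Rightarrow> bool" where
  "schwarz_type \<phi> \<longleftrightarrow> \<phi> holomorphic_on unit_disk \<and> \<phi> ` unit_disk \<subseteq> unit_disk \<and> \<phi> 0 = 0"

definition sup_norm_disk :: "(complex \<Rightarrow> complex) \<Rightarrow> real" where
  "sup_norm_disk \<phi> = (SUP z\<in>unit_disk. norm (\<phi> z))"

definition T_op :: "(complex \<Rightarrow> complex) \<Rightarrow> (complex \<Rightarrow> complex) \<Rightarrow> (complex \<Rightarrow> complex) \<Rightarrow> (complex \<Rightarrow> complex)" where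
  "T_op F \<phi> f = (\<lambda>z. F z * f (\<phi> z))"

end

theory Submission
  imports Defs
begin

lemma L1:
  fixes x y R :: real
  assumes "x > 0" "0 \<le> R" "R < 1" "(x-1)^2 + y^2 \<le> R^2 * ((x+1)^2 + y^2)"
  shows "(1+R^2)^2 * y^2 \<le> 4*R^2*(x^2+y^2)"
proof -
  define t where "t = 1 - R^2"
  define p where "p = 1 + R^2"
  have "R^2 < 1" using assms(2,3) by (simp add: power_less_one_iff abs_square_less_1)
  hence t0: "t > 0" unfolding t_def by simp
  have c: "t*(x^2+y^2) \<le> 2*p*x - t" using assms(4) unfolding t_def p_def
    by (simp add: algebra_simps power2_eq_square)
  have "t^2*(x^2+y^2) \<le> t*(2*p*x - t)"
    using mult_left_mono[OF c, of t] t0 by (simp add: power2_eq_square algebra_simps)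
  also have "\<dots> \<le> p^2*x^2" using sum_squares_ge_zero[of "p*x-t" 0]
    by (simp add: power2_eq_square algebra_simps)
  finally have a: "t^2*(x^2+y^2) \<le> p^2*x^2" .
  have b: "4*R^2 = p^2 - t^2" unfolding p_def t_def by (simp add: power2_eq_square algebra_simps)
  have "p^2*y^2 \<le> (p^2-t^2)*(x^2+y^2)" using a by (simp add: algebra_simps)
  thus ?thesis using b unfolding p_def by simp
qed

lemma L2:
  fixes u :: complex and R :: real
  assumes "Re u > 0" "0 \<le> R" "R < 1" "norm (u - 1) \<le> R * norm (u + 1)"
  shows "\<bar>Arg u\<bar> \<le> arcsin (2*R/(1+R^2))"
proof -
  have u0: "u \<noteq> 0" using assms(1) by auto
  have b: "\<bar>Arg u\<bar> < pi/2" using Arg_Re_pos assms(1) by auto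
  have "(norm (u-1))^2 \<le> (R * norm (u+1))^2"
    using assms(4) by (simp add: power_mono)
  hence h: "(Re u - 1)^2 + (Im u)^2 \<le> R^2 * ((Re u + 1)^2 + (Im u)^2)"
    by (simp add: cmod_power2 power_mult_distrib)
  have k: "(1+R^2)^2 * (Im u)^2 \<le> 4*R^2*((Re u)^2+(Im u)^2)"
    using L1[OF assms(1) assms(2) assms(3) h] .
  define s where "s = 2*R/(1+R^2)"
  have s0: "0 \<le> s" unfolding s_def using assms by simp
  have "0 \<le> (R-1)^2" by simp
  hence "2*R \<le> 1 + R^2" by (simp add: power2_eq_square algebra_simps)
  hence s1: "s \<le> 1" unfolding s_def by (simp add: add_pos_nonneg)
  have nu: "norm u > 0" using u0 by simp
  have "(\<bar>Im u\<bar>/norm u)^2 \<le> s^2"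
  proof -
    have "(1+R^2)^2 * (\<bar>Im u\<bar>)^2 \<le> (2*R)^2*(norm u)^2"
      using k by (simp add: cmod_power2 power_mult_distrib)
    moreover have "1 + R^2 \<noteq> 0" by (smt (verit) zero_le_power2)
    ultimately show ?thesis unfolding s_def using nu
      by (simp add: power_divide divide_simps mult.commute)
  qed
  hence q: "\<bar>Im u\<bar>/norm u \<le> s" using s0 by (meson abs_ge_zero divide_nonneg_nonneg norm_ge_zero power2_le_imp_le)
  have "sin \<bar>Arg u\<bar> = \<bar>Im u\<bar>/norm u"
  proof (cases "Arg u \<ge> 0")
    case True
    then have "Im u \<ge> 0" using Arg_less_0 by blast
    then show ?thesis using True sin_Arg[OF u0] by simp
  next
    case False
    then have "Im u < 0" using Arg_less_0 by (meson not_le)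
    then show ?thesis using False sin_Arg[OF u0] by simp
  qed
  hence "sin \<bar>Arg u\<bar> \<le> s" using q by simp
  hence "arcsin (sin \<bar>Arg u\<bar>) \<le> arcsin s"
    using s1 by (intro arcsin_le_arcsin) (auto intro: order_trans[OF _ sin_ge_zero])
  moreover have "arcsin (sin \<bar>Arg u\<bar>) = \<bar>Arg u\<bar>" using b by (intro arcsin_sin) auto
  ultimately show ?thesis unfolding s_def by simp
qed

lemma L3:
  assumes f: "f \<in> carath_class" and w: "norm w < 1"
  shows "norm (f w - 1) \<le> norm w * norm (f w + 1)"
proof -
  have hol: "f holomorphic_on unit_disk" and re: "\<And>z. z \<in> unit_disk \<Longrightarrow> Re (f z) > 0"
    and f0: "f 0 = 1" using f by (auto simp: carath_class_def)
  have nz: "f z + 1 \<noteq> 0" if "z \<in> unit_disk" for z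
  proof
    assume "f z + 1 = 0"
    hence "Re (f z + 1) = 0" by simp
    with re[OF that] show False by simp
  qed
  define g where "g z = (f z - 1)/(f z + 1)" for z
  have hg: "g holomorphic_on unit_disk" unfolding g_def
    by (intro holomorphic_intros hol nz) auto
  have g0: "g 0 = 0" by (simp add: g_def f0)
  have lt: "norm (f z - 1) < norm (f z + 1)" if "z \<in> unit_disk" for z
  proof -
    have "(norm (f z - 1))^2 = (norm (f z + 1))^2 - 4 * Re (f z)"
      unfolding cmod_power2 by (simp add: power2_eq_square algebra_simps)
    hence "(norm (f z - 1))^2 < (norm (f z + 1))^2"
      using re[OF that] by simp
    thus ?thesis by (meson norm_ge_zero power_less_imp_less_base)
  qed
  have "norm (g z) < 1" if "norm z < 1" for z
  proof -
    have zi: "z \<in> unit_disk" using that by simp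
    have "norm (g z) = norm (f z - 1) / norm (f z + 1)" by (simp add: g_def norm_divide)
    also have "\<dots> < 1" using lt[OF zi] nz[OF zi] by simp
    finally show ?thesis .
  qed
  hence gw: "norm (g w) \<le> norm w" using Schwarz_Lemma(1)[OF hg g0] w by blast
  have wi: "w \<in> unit_disk" using w by simp
  have "norm (f w - 1) = norm (g w) * norm (f w + 1)"
    using nz[OF wi] by (simp add: g_def norm_divide)
  also have "\<dots> \<le> norm w * norm (f w + 1)" using gw by (simp add: mult_right_mono)
  finally show ?thesis .
qed

lemma L4:
  fixes a b :: complex
  assumes "a \<noteq> 0" "b \<noteq> 0" "\<bar>Arg a\<bar> + \<bar>Arg b\<bar> < pi/2"
  shows "Re (a*b) > 0"
proof -
  have e1: "Re a = norm a * cos (Arg a)" "Im a = norm a * sin (Arg a)"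
    using cos_Arg[OF assms(1)] sin_Arg[OF assms(1)] assms(1) by simp_all
  have e2: "Re b = norm b * cos (Arg b)" "Im b = norm b * sin (Arg b)"
    using cos_Arg[OF assms(2)] sin_Arg[OF assms(2)] assms(2) by simp_all
  have "Re (a*b) = Re a * Re b - Im a * Im b" by simp
  also have "\<dots> = norm a * norm b * cos (Arg a + Arg b)"
    unfolding e1 e2 cos_add by (simp add: algebra_simps)
  finally have "Re (a*b) = norm a * norm b * cos (Arg a + Arg b)" .
  moreover have "cos (Arg a + Arg b) > 0" using assms(3) by (intro cos_gt_zero_pi) auto
  ultimately show ?thesis using assms by simp
qed

theorem proposition3p4:
  fixes F \<phi> :: "complex \<Rightarrow> complex" and R :: real
  assumes "F \<in> carath_class"
    and "schwarz_type \<phi>"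
    and "sup_norm_disk \<phi> = R" and "R < 1"
    and "\<forall>z\<in>unit_disk. \<bar>Arg (F z)\<bar> < pi / 2 - arcsin (2 * R / (1 + R\<^sup>2))"
  shows "\<forall>f\<in>carath_class. T_op F \<phi> f \<in> carath_class"
proof
  fix f assume f: "f \<in> carath_class"
  have holF: "F holomorphic_on unit_disk" and reF: "\<And>z. z \<in> unit_disk \<Longrightarrow> Re (F z) > 0"
    and F0: "F 0 = 1" using assms(1) by (auto simp: carath_class_def)
  have holf: "f holomorphic_on unit_disk" and ref: "\<And>z. z \<in> unit_disk \<Longrightarrow> Re (f z) > 0"
    and f0: "f 0 = 1" using f by (auto simp: carath_class_def)
  have holp: "\<phi> holomorphic_on unit_disk" and pin: "\<phi> ` unit_disk \<subseteq> unit_disk" and p0: "\<phi> 0 = 0"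
    using assms(2) by (auto simp: schwarz_type_def)
  have bdd: "bdd_above ((\<lambda>z. norm (\<phi> z)) ` unit_disk)"
    using pin by (intro bdd_aboveI[of _ 1]) (auto simp: less_imp_le)
  have pR: "norm (\<phi> z) \<le> R" if "z \<in> unit_disk" for z
    using cSUP_upper[OF that bdd] assms(3) by (simp add: sup_norm_disk_def)
  have R0: "0 \<le> R" using pR[of 0] p0 by simp
  have "(\<lambda>z. f (\<phi> z)) holomorphic_on unit_disk"
    using holomorphic_on_compose_gen[OF holp holf pin] by (simp add: o_def)
  hence hol: "T_op F \<phi> f holomorphic_on unit_disk" unfolding T_op_def
    by (intro holomorphic_intros holF)
  have "Re (T_op F \<phi> f z) > 0" if z: "z \<in> unit_disk" for z
  proof -
    define w where "w = \<phi> z"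
    have w: "w \<in> unit_disk" using pin z unfolding w_def by (meson image_subset_iff)
    have "norm (f w - 1) \<le> norm w * norm (f w + 1)" using L3[OF f] w by simp
    also have "\<dots> \<le> R * norm (f w + 1)" using pR[OF z] unfolding w_def by (simp add: mult_right_mono)
    finally have "\<bar>Arg (f w)\<bar> \<le> arcsin (2*R/(1+R^2))"
      using L2 ref[OF w] R0 assms(4) by blast
    moreover have "\<bar>Arg (F z)\<bar> < pi / 2 - arcsin (2 * R / (1 + R\<^sup>2))" using assms(5) z by blast
    moreover have "F z \<noteq> 0" "f w \<noteq> 0" using reF[OF z] ref[OF w] by auto
    ultimately have "Re (F z * f w) > 0" by (intro L4) auto
    thus ?thesis by (simp add: T_op_def w_def)
  qed
  moreover have "T_op F \<phi> f 0 = 1" by (simp add: T_op_def F0 f0 p0)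
  ultimately show "T_op F \<phi> f \<in> carath_class" using hol by (simp add: carath_class_def)
qed

end
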